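(* Let $\mathcal{W}=\{W_1,\dots,W_N\}$ be a finite set of $d\times k$ real matrices, let $\mathcal{V}$ be a linear subspace of $\mathbb{S}^d$, and let $\mathcal{C}(\mathcal{W})^*=\{\sum_{i=1}^NW_iX_iW_i^T: X_i\in\mathbb{S}^k_+\}$. Consider the semidefinite program in the variables $X\in\mathbb{S}^d$, $X_i,T_i\in\mathbb{S}^k$: $$\text{maximize }\sum_{i=1}^N\operatorname{trace}T_i\ \text{ subject to } X\in\mathcal{V},\ X=\sum_{i=1}^NW_iX_iW_i^T,\ X_i\succeq T_i,\ I\succeq T_i\succeq 0\ (i=1,\dots,N).$$ For any optimal solution $(X,X_i,T_i)$ of this program, $X\in\mathcal{V}\cap\mathcal{C}(\mathcal{W})^*$ and $\operatorname{rank}X\ge\operatorname{rank}Y$ for all $Y\in\mathcal{V}\cap\mathcal{C}(\mathcal{W})^*$.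
   Context: $\mathbb{S}^d$ denotes real symmetric $d\times d$ matrices, $\mathbb{S}^k_+$ the cone of positive semidefinite $k\times k$ matrices, and $A\succeq B$ means $A-B$ is positive semidefinite. *)

theory Defs
  imports "HOL-Analysis.Analysis"
begin

definition sym_mat :: "real^'n^'n \<Rightarrow> bool" where
  "sym_mat A \<longleftrightarrow> transpose A = A"

definition psd :: "real^'n^'n \<Rightarrow> bool" where
  "psd A \<longleftrightarrow> sym_mat A \<and> (\<forall>v. 0 \<le> v \<bullet> (A *v v))"

definition C_dual :: "(nat \<Rightarrow> real^'k^'d) \<Rightarrow> nat \<Rightarrow> (real^'d^'d) set" where
  "C_dual W N = {Y. \<exists>Xs :: nat \<Rightarrow> real^'k^'k. (\<forall>i<N. psd (Xs i)) \<and>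
      Y = (\<Sum>i<N. W i ** Xs i ** transpose (W i))}"

definition sdp_feasible ::
  "(nat \<Rightarrow> real^'k^'d) \<Rightarrow> nat \<Rightarrow> (real^'d^'d) set \<Rightarrow>
   real^'d^'d \<Rightarrow> (nat \<Rightarrow> real^'k^'k) \<Rightarrow> (nat \<Rightarrow> real^'k^'k) \<Rightarrow> bool" where
  "sdp_feasible W N V X Xs Ts \<longleftrightarrow>
     sym_mat X \<and> X \<in> V \<and> X = (\<Sum>i<N. W i ** Xs i ** transpose (W i)) \<and>
     (\<forall>i<N. sym_mat (Xs i) \<and> sym_mat (Ts i) \<and>
            psd (Xs i - Ts i) \<and> psd (mat 1 - Ts i) \<and> psd (Ts i))"

definition sdp_objective :: "nat \<Rightarrow> (nat \<Rightarrow> real^'k^'k) \<Rightarrow> real" where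
  "sdp_objective N Ts = (\<Sum>i<N. trace (Ts i))"

definition sdp_optimal ::
  "(nat \<Rightarrow> real^'k^'d) \<Rightarrow> nat \<Rightarrow> (real^'d^'d) set \<Rightarrow>
   real^'d^'d \<Rightarrow> (nat \<Rightarrow> real^'k^'k) \<Rightarrow> (nat \<Rightarrow> real^'k^'k) \<Rightarrow> bool" where
  "sdp_optimal W N V X Xs Ts \<longleftrightarrow> sdp_feasible W N V X Xs Ts \<and>
     (\<forall>X' Xs' Ts'. sdp_feasible W N V X' Xs' Ts' \<longrightarrow>
        sdp_objective N Ts' \<le> sdp_objective N Ts)"

end

theory Submission
  imports Defs
begin
definition outer :: "real^'n \<Rightarrow> real^'n^'n" where
  "outer u = (\<chi> i j. u$i * u$j)"

lemma outer_mv: "outer u *v w = (u \<bullet> w) *\<^sub>R u"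
  by (simp add: outer_def matrix_vector_mult_def vec_eq_iff inner_vec_def sum_distrib_left mult_ac)

lemma outer_q: "w \<bullet> (outer u *v w) = (u \<bullet> w)^2"
  by (simp add: outer_mv power2_eq_square inner_commute)

lemma outer_sym: "sym_mat (outer u)"
  by (simp add: sym_mat_def outer_def transpose_def vec_eq_iff mult.commute)

lemma outer_trace: "trace (outer u) = u \<bullet> u"
  by (simp add: trace_def outer_def inner_vec_def)

lemma sym_add: "sym_mat A \<Longrightarrow> sym_mat B \<Longrightarrow> sym_mat (A + B)"
  by (simp add: sym_mat_def transpose_def vec_eq_iff)
lemma sym_diff: "sym_mat A \<Longrightarrow> sym_mat B \<Longrightarrow> sym_mat (A - B)"
  by (simp add: sym_mat_def transpose_def vec_eq_iff)

lemma sym_inner: "sym_mat A \<Longrightarrow> x \<bullet> (A *v y) = (A *v x) \<bullet> y"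
  by (metis dot_lmul_matrix sym_mat_def transpose_matrix_vector)

lemma q_add: "v \<bullet> ((A + B) *v v) = v \<bullet> (A *v v) + v \<bullet> (B *v v)"
  by (simp add: matrix_vector_mult_add_rdistrib inner_add_right)
lemma q_diff: "v \<bullet> ((A - B) *v v) = v \<bullet> (A *v v) - v \<bullet> ((B::real^'n^'n) *v v)"
  by (simp add: matrix_vector_mult_diff_rdistrib inner_diff_right)

lemma mv_sum: "(\<Sum>i\<in>S. f i) *v x = (\<Sum>i\<in>S. f i *v x)"
  by (induction S rule: infinite_finite_induct) (auto simp: matrix_vector_mult_add_rdistrib)

lemma psd_cs:
  assumes "psd A"
  shows "(x \<bullet> (A *v y))^2 \<le> (x \<bullet> (A *v x)) * (y \<bullet> (A *v y))"
proof -
  have s: "sym_mat A" and q: "\<And>v. 0 \<le> v \<bullet> (A *v v)" using assms by (auto simp: psd_def)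
  define a where "a = y \<bullet> (A *v y)"
  define b where "b = x \<bullet> (A *v y)"
  define c where "c = x \<bullet> (A *v x)"
  have ba: "y \<bullet> (A *v x) = b" unfolding b_def using sym_inner[OF s, of y x] by (simp add: inner_commute)
  have quad: "0 \<le> c + 2*t*b + t^2 * a" for t
  proof -
    have "0 \<le> (x + t *\<^sub>R y) \<bullet> (A *v (x + t *\<^sub>R y))" by (rule q)
    also have "\<dots> = c + 2*t*b + t^2 * a"
      by (simp add: matrix_vector_right_distrib matrix_vector_mult_scaleR inner_add_left inner_add_right
          a_def c_def b_def[symmetric] ba power2_eq_square algebra_simps)
    finally show ?thesis .
  qed
  have a0: "0 \<le> a" unfolding a_def by (rule q)
  show ?thesis
  proof (cases "a = 0")
    case True
    show ?thesis
    proof (cases "b = 0")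
      case False
      have "0 \<le> c + 2*(-(c+1)/(2*b))*b" using quad[of "-(c+1)/(2*b)"] True by simp
      with False show ?thesis by (simp add: field_simps)
    qed (simp add: b_def[symmetric] a_def[symmetric] c_def[symmetric] True)
  next
    case False
    then have ap: "a > 0" using a0 by simp
    have "0 \<le> c + 2*(-b/a)*b + (-b/a)^2 * a" by (rule quad)
    then have "0 \<le> c*a - b^2" using ap by (simp add: field_simps power2_eq_square)
    then show ?thesis by (simp add: b_def[symmetric] a_def[symmetric] c_def[symmetric] mult.commute)
  qed
qed

lemma psd_zero:
  assumes "psd A" "x \<bullet> (A *v x) = 0"
  shows "A *v x = 0"
proof -
  have "((A *v x) \<bullet> (A *v x))^2 \<le> ((A *v x) \<bullet> (A *v (A *v x))) * (x \<bullet> (A *v x))"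
    by (rule psd_cs[OF assms(1)])
  with assms(2) have "((A *v x) \<bullet> (A *v x))^2 \<le> 0" by simp
  then show ?thesis by simp
qed

lemma range_ker:
  fixes A :: "real^'n^'n"
  assumes "sym_mat A"
  shows "range ((*v) A) = {x. A *v x = 0}\<^sup>\<bottom>"
proof -
  have lin: "linear ((*v) A)" by simp
  have adj: "adjoint ((*v) A) = (*v) A"
  proof -
    have e: "transpose A = A" using assms by (simp add: sym_mat_def)
    show ?thesis using adjoint_matrix[of A] by (simp only: e)
  qed
  have "(*v) A -` {0} = (range ((*v) A))\<^sup>\<bottom>"
    using ker_orthogonal_comp_adjoint[OF lin] adj by simp
  moreover have "(*v) A -` {0} = {x. A *v x = 0}" by auto
  ultimately have "{x. A *v x = 0}\<^sup>\<bottom> = (range ((*v) A))\<^sup>\<bottom>\<^sup>\<bottom>" by simp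
  also have "\<dots> = range ((*v) A)"
    by (rule orthogonal_comp_self) (simp add: linear_subspace_image)
  finally show ?thesis by simp
qed

lemma mat_rdistrib: "((A::real^'n^'m) + B) ** C = A ** C + B ** C"
  by (simp add: vec_eq_iff matrix_matrix_mult_def sum.distrib algebra_simps)

lemma conj_add: "(W::real^'k^'d) ** (A + B) ** transpose W = W ** A ** transpose W + W ** B ** transpose W"
  by (simp add: matrix_add_ldistrib mat_rdistrib)

lemma q_conj: "w \<bullet> (((W::real^'k^'d) ** A ** transpose W) *v w) = (transpose W *v w) \<bullet> (A *v (transpose W *v w))"
proof -
  have "(W ** A ** transpose W) *v w = W *v (A *v (transpose W *v w))"
    by (simp only: matrix_vector_mul_assoc matrix_mul_assoc)
  then show ?thesis by (simp add: dot_lmul_matrix[symmetric])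
qed

lemma psd_sum_diff:
  assumes "psd (A - B)" "psd B"
  shows "psd A"
proof -
  have "sym_mat A" using assms unfolding psd_def sym_mat_def
    by (metis diff_add_cancel transpose_def sym_add sym_mat_def)
  moreover have "0 \<le> v \<bullet> (A *v v)" for v
    using assms unfolding psd_def q_diff by (smt (verit) q_diff)
  ultimately show ?thesis by (simp add: psd_def)
qed

lemma key:
  fixes W :: "nat \<Rightarrow> real^'k^'d" and Ys :: "nat \<Rightarrow> real^'k^'k"
  assumes V: "subspace V" "\<forall>A\<in>V. sym_mat A" and opt: "sdp_optimal W N V X Xs Ts"
    and YV: "Y \<in> V" and Yeq: "Y = (\<Sum>i<N. W i ** Ys i ** transpose (W i))"
    and Yp: "\<forall>i<N. psd (Ys i)" and i: "i < N" and v: "Xs i *v v = 0"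
  shows "Ys i *v v = 0"
proof (rule ccontr)
  assume nz: "Ys i *v v \<noteq> 0"
  have feas: "sdp_feasible W N V X Xs Ts" using opt by (simp add: sdp_optimal_def)
  have best: "\<And>X' Xs' Ts'. sdp_feasible W N V X' Xs' Ts' \<Longrightarrow> sdp_objective N Ts' \<le> sdp_objective N Ts"
    using opt by (simp add: sdp_optimal_def)
  have XV: "X \<in> V" and Xeq: "X = (\<Sum>i<N. W i ** Xs i ** transpose (W i))"
    and fj: "\<And>j. j < N \<Longrightarrow> sym_mat (Xs j) \<and> sym_mat (Ts j) \<and>
            psd (Xs j - Ts j) \<and> psd (mat 1 - Ts j) \<and> psd (Ts j)"
    using feas by (auto simp: sdp_feasible_def)
  have pX: "psd (Xs j)" if "j < N" for j using fj[OF that] psd_sum_diff by blast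
  define Z where "Z = Xs i + Ys i"
  have qXi: "0 \<le> w \<bullet> (Xs i *v w)" for w using pX[OF i] by (simp add: psd_def)
  have qYi: "0 \<le> w \<bullet> (Ys i *v w)" for w using Yp i by (simp add: psd_def)
  have symY: "sym_mat (Ys i)" using Yp i by (simp add: psd_def)
  have symZ: "sym_mat Z" unfolding Z_def using pX[OF i] symY by (simp add: psd_def sym_add)
  have qZ: "w \<bullet> (Z *v w) = w \<bullet> (Xs i *v w) + w \<bullet> (Ys i *v w)" for w
    unfolding Z_def by (rule q_add)
  have pZ: "psd Z" using symZ qZ qXi qYi by (simp add: psd_def add_nonneg_nonneg)
  define K where "K = {x. Z *v x = 0}"
  have sK: "subspace K" unfolding K_def subspace_def
    by (simp add: matrix_vector_right_distrib matrix_vector_mult_scaleR)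
  obtain p u where p: "p \<in> span K" and orth: "\<And>w. w \<in> span K \<Longrightarrow> orthogonal u w"
    and vpu: "v = p + u"
    using orthogonal_subspace_decomp_exists[of K v] by metis
  have pK: "p \<in> K" using p sK by (metis span_eq_iff)
  have Zp: "p \<bullet> (Z *v p) = 0" using pK by (simp add: K_def)
  have "p \<bullet> (Xs i *v p) = 0" using Zp qZ[of p] qXi[of p] qYi[of p] by linarith
  then have Xp: "Xs i *v p = 0" using psd_zero pX[OF i] by blast
  have "p \<bullet> (Ys i *v p) = 0" using Zp qZ[of p] qXi[of p] qYi[of p] by linarith
  then have Yp0: "Ys i *v p = 0" using psd_zero Yp i by blast
  have Xu: "Xs i *v u = 0" using v Xp vpu by (simp add: matrix_vector_right_distrib)
  have Yu: "Ys i *v u \<noteq> 0" using nz Yp0 vpu by (simp add: matrix_vector_right_distrib)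
  then have unz: "u \<noteq> 0" by auto
  have "u \<in> K\<^sup>\<bottom>" using orth span_superset
    by (auto simp: orthogonal_comp_def orthogonal_commute)
  then have "u \<in> range ((*v) Z)" using range_ker[OF symZ] by (simp add: K_def)
  then obtain a where ua: "u = Z *v a" by auto
  define c where "c = a \<bullet> (Z *v a)"
  have c0: "0 \<le> c" using pZ by (simp add: psd_def c_def)
  have cs: "(u \<bullet> w)^2 \<le> c * (w \<bullet> (Z *v w))" for w
  proof -
    have "u \<bullet> w = a \<bullet> (Z *v w)" using sym_inner[OF symZ, of a w] ua by (simp add: inner_commute)
    then show ?thesis using psd_cs[OF pZ, of a w] by (simp add: c_def)
  qed
  have Tu: "Ts i *v u = 0"
  proof -
    have "0 \<le> u \<bullet> ((Xs i - Ts i) *v u)" using fj[OF i] by (simp add: psd_def)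
    then have "u \<bullet> (Ts i *v u) \<le> 0" using Xu by (simp add: q_diff)
    moreover have "0 \<le> u \<bullet> (Ts i *v u)" using fj[OF i] by (simp add: psd_def)
    ultimately show ?thesis using psd_zero fj[OF i] by (meson antisym)
  qed
  define s where "s = 1 / (1 + norm u + c)"
  have s0: "0 < s" using c0 by (simp add: s_def add_pos_nonneg)
  have sc: "s^2 * c \<le> 1"
  proof -
    have "c \<le> (1 + norm u + c)^2" using c0 by (simp add: power2_eq_square algebra_simps)
    moreover have "0 < (1 + norm u + c)^2" using c0
      by (metis add_pos_nonneg norm_ge_zero zero_less_one zero_less_power)
    ultimately show ?thesis by (simp add: s_def power_divide divide_le_eq)
  qed
  have su: "s^2 * (u \<bullet> u) \<le> 1"
  proof -
    have "u \<bullet> u \<le> (1 + norm u + c)^2" using c0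
      by (simp add: power2_eq_square algebra_simps power2_norm_eq_inner[symmetric])
    moreover have "0 < (1 + norm u + c)^2" using c0
      by (metis add_pos_nonneg norm_ge_zero zero_less_one zero_less_power)
    ultimately show ?thesis by (simp add: s_def power_divide divide_le_eq)
  qed
  define u' where "u' = s *\<^sub>R u"
  have Xu': "Xs i *v u' = 0" and Tu': "Ts i *v u' = 0"
    using Xu Tu by (simp_all add: u'_def matrix_vector_mult_scaleR)
  have u'pos: "0 < u' \<bullet> u'" using unz s0 by (simp add: u'_def)
  have u'le: "u' \<bullet> u' \<le> 1" using su by (simp add: u'_def power2_eq_square)
  have cs': "(u' \<bullet> w)^2 \<le> w \<bullet> (Z *v w)" for w
  proof -
    have "(u' \<bullet> w)^2 = s^2 * (u \<bullet> w)^2" by (simp add: u'_def power_mult_distrib)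
    also have "\<dots> \<le> s^2 * (c * (w \<bullet> (Z *v w)))" using cs[of w] by (simp add: mult_left_mono)
    also have "\<dots> = (s^2 * c) * (w \<bullet> (Z *v w))" by simp
    also have "\<dots> \<le> w \<bullet> (Z *v w)"
    proof -
      have "0 \<le> w \<bullet> (Z *v w)" using pZ by (simp add: psd_def)
      then show ?thesis using sc by (metis mult_left_le mult.commute)
    qed
    finally show ?thesis .
  qed
  define X' where "X' = X + X + Y"
  define Xs' where "Xs' = (\<lambda>j. Xs j + Xs j + Ys j)"
  define Ts' where "Ts' = Ts(i := Ts i + outer u')"
  have X'V: "X' \<in> V" unfolding X'_def using V(1) XV YV by (metis subspace_add)
  have X'eq: "X' = (\<Sum>j<N. W j ** Xs' j ** transpose (W j))"
    unfolding X'_def Xs'_def conj_add sum.distrib by (simp only: Xeq[symmetric] Yeq[symmetric])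
  have fj': "sym_mat (Xs' j) \<and> sym_mat (Ts' j) \<and>
            psd (Xs' j - Ts' j) \<and> psd (mat 1 - Ts' j) \<and> psd (Ts' j)" if j: "j < N" for j
  proof -
    have sX: "sym_mat (Xs j)" and sT: "sym_mat (Ts j)" and sY: "sym_mat (Ys j)"
      using fj[OF j] Yp j by (auto simp: psd_def)
    have qXT: "0 \<le> w \<bullet> ((Xs j - Ts j) *v w)" for w using fj[OF j] by (simp add: psd_def)
    have qIT: "0 \<le> w \<bullet> ((mat 1 - Ts j) *v w)" for w using fj[OF j] by (simp add: psd_def)
    have qT: "0 \<le> w \<bullet> (Ts j *v w)" for w using fj[OF j] by (simp add: psd_def)
    have qX: "0 \<le> w \<bullet> (Xs j *v w)" for w using pX[OF j] by (simp add: psd_def)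
    have qY: "0 \<le> w \<bullet> (Ys j *v w)" for w using Yp j by (simp add: psd_def)
    have sXs': "sym_mat (Xs' j)" unfolding Xs'_def using sX sY by (intro sym_add)
    show ?thesis
    proof (cases "j = i")
      case False
      then have Tj: "Ts' j = Ts j" by (simp add: Ts'_def)
      have "0 \<le> w \<bullet> ((Xs' j - Ts' j) *v w)" for w
        using qXT[of w] qX[of w] qY[of w] unfolding Tj Xs'_def q_add q_diff by linarith
      then show ?thesis using sXs' Tj fj[OF j] sT by (simp add: psd_def sym_diff)
    next
      case True
      then have Tj: "Ts' j = Ts i + outer u'" by (simp add: Ts'_def)
      have sT': "sym_mat (Ts' j)" unfolding Tj using sT True by (simp add: sym_add outer_sym)
      have "0 \<le> w \<bullet> ((Xs' j - Ts' j) *v w)" for w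
      proof -
        have "w \<bullet> ((Xs' j - Ts' j) *v w) = w \<bullet> ((Xs i - Ts i) *v w) + w \<bullet> (Z *v w) - (u' \<bullet> w)^2"
          unfolding Tj Xs'_def Z_def using True by (simp only: q_add q_diff outer_q)
        then show ?thesis using qXT[of w] cs'[of w] True by simp
      qed
      moreover have "0 \<le> w \<bullet> ((mat 1 - Ts' j) *v w)" for w
      proof -
        define B where "B = mat 1 - Ts i"
        have pB: "psd B" using fj[OF i] by (simp add: B_def)
        have Bu: "B *v u' = u'" using Tu' by (simp add: B_def matrix_vector_mult_diff_rdistrib)
        have "u' \<bullet> w = u' \<bullet> (B *v w)"
          using sym_inner[of B u' w] pB Bu by (simp add: psd_def inner_commute)
        then have "(u' \<bullet> w)^2 \<le> (u' \<bullet> u') * (w \<bullet> (B *v w))"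
          using psd_cs[OF pB, of u' w] Bu by simp
        also have "\<dots> \<le> w \<bullet> (B *v w)"
          using u'le pB by (metis mult_left_le mult.commute psd_def)
        finally have "(u' \<bullet> w)^2 \<le> w \<bullet> (B *v w)" .
        moreover have "w \<bullet> ((mat 1 - Ts' j) *v w) = w \<bullet> (B *v w) - (u' \<bullet> w)^2"
          unfolding Tj B_def by (simp add: q_diff q_add outer_q)
        ultimately show ?thesis by simp
      qed
      moreover have "0 \<le> w \<bullet> (Ts' j *v w)" for w
        using qT[of w] True unfolding Tj by (simp add: q_add outer_q)
      moreover have sI: "sym_mat (mat 1 :: real^'k^'k)" by (simp add: sym_mat_def)
      ultimately show ?thesis using sXs' sT' sym_diff[OF sXs' sT'] sym_diff[OF sI sT']
        by (simp add: psd_def)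
    qed
  qed
  have feas': "sdp_feasible W N V X' Xs' Ts'"
    unfolding sdp_feasible_def using X'V X'eq fj' V(2) by blast
  have tr: "trace (Ts' j) = trace (Ts j) + (if j = i then u' \<bullet> u' else 0)" for j
    by (simp add: Ts'_def trace_add outer_trace)
  have obj: "sdp_objective N Ts' = sdp_objective N Ts + u' \<bullet> u'"
    unfolding sdp_objective_def tr sum.distrib using i by simp
  show False using best[OF feas'] obj u'pos by simp
qed

theorem corollary2:
  fixes W :: "nat \<Rightarrow> real^'k^'d" and N :: nat
    and V :: "(real^'d^'d) set"
    and X :: "real^'d^'d" and Xs Ts :: "nat \<Rightarrow> real^'k^'k"
  assumes "subspace V" and "\<forall>A\<in>V. sym_mat A"
    and "sdp_optimal W N V X Xs Ts"
  shows "X \<in> V \<inter> C_dual W N \<and> (\<forall>Y\<in>V \<inter> C_dual W N. rank Y \<le> rank X)"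
proof -
  have feas: "sdp_feasible W N V X Xs Ts" using assms(3) by (simp add: sdp_optimal_def)
  have XV: "X \<in> V" and Xeq: "X = (\<Sum>i<N. W i ** Xs i ** transpose (W i))"
    and fj: "\<And>j. j < N \<Longrightarrow> psd (Xs j - Ts j) \<and> psd (Ts j)"
    using feas by (auto simp: sdp_feasible_def)
  have pX: "psd (Xs j)" if "j < N" for j using fj[OF that] psd_sum_diff by blast
  have XC: "X \<in> C_dual W N" unfolding C_dual_def using pX Xeq by blast
  have "rank Y \<le> rank X" if Y: "Y \<in> V" "Y \<in> C_dual W N" for Y
  proof -
    obtain Ys where Yp: "\<forall>i<N. psd (Ys i)" and Yeq: "Y = (\<Sum>i<N. W i ** Ys i ** transpose (W i))"
      using Y(2) unfolding C_dual_def by blast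
    have ker: "{x. X *v x = 0} \<subseteq> {x. Y *v x = 0}"
    proof
      fix w assume "w \<in> {x. X *v x = 0}"
      then have Xw: "X *v w = 0" by simp
      have terms: "\<And>j. j \<in> {..<N} \<Longrightarrow> 0 \<le> (transpose (W j) *v w) \<bullet> (Xs j *v (transpose (W j) *v w))"
        using pX by (simp add: psd_def)
      have "0 = w \<bullet> (X *v w)" using Xw by simp
      also have "\<dots> = (\<Sum>j<N. (transpose (W j) *v w) \<bullet> (Xs j *v (transpose (W j) *v w)))"
        by (subst Xeq) (simp add: mv_sum inner_sum_right q_conj)
      finally have "(\<Sum>j<N. (transpose (W j) *v w) \<bullet> (Xs j *v (transpose (W j) *v w))) = 0" by simp
      then have z: "\<And>j. j < N \<Longrightarrow> (transpose (W j) *v w) \<bullet> (Xs j *v (transpose (W j) *v w)) = 0"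
      proof -
        fix j assume j: "j < N"
        have "\<forall>x\<in>{..<N}. (transpose (W x) *v w) \<bullet> (Xs x *v (transpose (W x) *v w)) = 0"
          using sum_nonneg_eq_0_iff[of "{..<N}" "\<lambda>j. (transpose (W j) *v w) \<bullet> (Xs j *v (transpose (W j) *v w))"]
            terms \<open>(\<Sum>j<N. _) = 0\<close> by blast
        then show "(transpose (W j) *v w) \<bullet> (Xs j *v (transpose (W j) *v w)) = 0" using j by blast
      qed
      have "Ys j *v (transpose (W j) *v w) = 0" if j: "j < N" for j
        using key[OF assms(1,2,3) Y(1) Yeq Yp j] psd_zero[OF pX[OF j] z[OF j]] by blast
      then have "Y *v w = 0"
        by (subst Yeq) (simp add: mv_sum matrix_vector_mul_assoc[symmetric])
      then show "w \<in> {x. Y *v x = 0}" by simp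
    qed
    have sX: "sym_mat X" and sY: "sym_mat Y" using assms(2) XV Y(1) by auto
    have "range ((*v) Y) \<subseteq> range ((*v) X)"
      using range_ker[OF sX] range_ker[OF sY] orthogonal_comp_anti_mono[OF ker] by simp
    then show ?thesis by (simp add: rank_dim_range dim_subset)
  qed
  then show ?thesis using XV XC by blast
qed

end
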